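(* Let $\gamma\ge0$ be an integer and let $\xi=\{\xi^m\}$ with $\xi^m=K_\gamma\mathbf{1}(m=\gamma)$, $K_\gamma=\pm2\omega_\gamma\sqrt{\frac{2}{3C_{\gamma\gamma\gamma\gamma}}}$. Then the non-degeneracy condition $\ker(d\mathcal{M}(\xi))=\{0\}$ (for $d\mathcal{M}(\xi)$ acting on $l^2_{s+3}$) is equivalent to: $\omega_m^2C_{\gamma\gamma\gamma\gamma}-2\omega_\gamma^2C_{\gamma\gamma mm}\ne0$ for all $m\ge2\gamma+1$, and $D_{\gamma n}\ne0$ for all $n\in\{0,1,\dots,\gamma-1\}$, where $$D_{\gamma n}=\left[\omega_n^2C_{\gamma\gamma\gamma\gamma}-2\omega_\gamma^2C_{\gamma\gamma nn}\right]\left[\omega_{2\gamma-n}^2C_{\gamma\gamma\gamma\gamma}-2\omega_\gamma^2C_{\gamma,\gamma,2\gamma-n,2\gamma-n}\right]-\left[\omega_\gamma^2C_{\gamma,2\gamma-n,\gamma,n}\right]^2.$$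
   Context: $\omega_n=n+1$, $C_{ijkm}=\frac2\pi\int_{-1}^1U_iU_jU_kU_m\sqrt{1-y^2}\,dy$ ($U_n$ Chebyshev polynomials of the second kind). $l^2_s$: sequences with $\sum_jj^{2s}|u^j|^2<\infty$. $(A\xi)^m=\omega_m^2\xi^m$; $(f(u))^m=-\sum_{i,j,k\ge0}C_{ijkm}u^iu^ju^k$; $\Phi^t(\xi)=\{\xi^n\cos(\omega_nt)\}_n$; $\mathcal{M}(\xi)=A\xi+\frac1{2\pi}\int_0^{2\pi}\Phi^t[f(\Phi^t(\xi))]dt$. *)

theory Defs
  imports "HOL-Analysis.Analysis"
begin

fun chebU :: "nat \<Rightarrow> real \<Rightarrow> real" where
  "chebU 0 y = 1"
| "chebU (Suc 0) y = 2 * y"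
| "chebU (Suc (Suc n)) y = 2 * y * chebU (Suc n) y - chebU n y"

definition om :: "nat \<Rightarrow> real" where
  "om n = real n + 1"

definition CC :: "nat \<Rightarrow> nat \<Rightarrow> nat \<Rightarrow> nat \<Rightarrow> real" where
  "CC i j k m = (2 / pi) * integral {-1..1}
      (\<lambda>y. chebU i y * chebU j y * chebU k y * chebU m y * sqrt (1 - y\<^sup>2))"

definition l2s :: "real \<Rightarrow> (nat \<Rightarrow> real) \<Rightarrow> bool" where
  "l2s s u \<longleftrightarrow> summable (\<lambda>j. real j powr (2 * s) * (u j)\<^sup>2)"

definition fnl :: "(nat \<Rightarrow> real) \<Rightarrow> nat \<Rightarrow> real" where
  "fnl u m = - (\<Sum>\<^sub>\<infinity>(i, j, k) \<in> UNIV. CC i j k m * u i * u j * u k)"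

definition Phi :: "real \<Rightarrow> (nat \<Rightarrow> real) \<Rightarrow> nat \<Rightarrow> real" where
  "Phi t \<xi> n = \<xi> n * cos (om n * t)"

definition MM :: "(nat \<Rightarrow> real) \<Rightarrow> nat \<Rightarrow> real" where
  "MM \<xi> m = (om m)\<^sup>2 * \<xi> m
      + (1 / (2 * pi)) * integral {0..2 * pi} (\<lambda>t. Phi t (fnl (Phi t \<xi>)) m)"

definition dM :: "(nat \<Rightarrow> real) \<Rightarrow> (nat \<Rightarrow> real) \<Rightarrow> nat \<Rightarrow> real" where
  "dM \<xi> \<eta> m = deriv (\<lambda>\<epsilon>. MM (\<lambda>j. \<xi> j + \<epsilon> * \<eta> j) m) 0"

definition ker_dM :: "real \<Rightarrow> (nat \<Rightarrow> real) \<Rightarrow> (nat \<Rightarrow> real) set" where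
  "ker_dM s \<xi> = {\<eta>. l2s (s + 3) \<eta> \<and> (\<forall>m. dM \<xi> \<eta> m = 0)}"

definition Dgn :: "nat \<Rightarrow> nat \<Rightarrow> real" where
  "Dgn g n =
     ((om n)\<^sup>2 * CC g g g g - 2 * (om g)\<^sup>2 * CC g g n n)
   * ((om (2*g - n))\<^sup>2 * CC g g g g - 2 * (om g)\<^sup>2 * CC g g (2*g - n) (2*g - n))
   - ((om g)\<^sup>2 * CC g (2*g - n) g n)\<^sup>2"

end

theory Submission
  imports Defs
begin

lemma two_induct: assumes "P 0" "P (Suc 0)" "\<And>n. P n \<Longrightarrow> P (Suc n) \<Longrightarrow> P (Suc (Suc n))" shows "P n"
proof -
  have "P n \<and> P (Suc n)" by (induction n) (use assms in auto)
  then show ?thesis by simp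
qed

lemma chebU_cos_sum:
  "chebU n (cos t) = (\<Sum>r\<le>n. cos ((real n - 2 * real r) * t))"
proof (induction n rule: two_induct)
  case 1 then show ?case by simp
next
  case 2 then show ?case by (simp add: algebra_simps)
next
  case (3 n)
  have tr: "2 * cos t * cos (x * t) = cos ((x + 1) * t) + cos ((x - 1) * t)" for x
    by (simp add: cos_add cos_diff algebra_simps)
  have "chebU (Suc (Suc n)) (cos t) = 2 * cos t * (\<Sum>r\<le>Suc n. cos ((real (Suc n) - 2 * real r) * t))
        - (\<Sum>r\<le>n. cos ((real n - 2 * real r) * t))"
    using 3 by simp
  also have "2 * cos t * (\<Sum>r\<le>Suc n. cos ((real (Suc n) - 2 * real r) * t))
     = (\<Sum>r\<le>Suc n. cos ((real (Suc (Suc n)) - 2 * real r) * t)) + (\<Sum>r\<le>Suc n. cos ((real n - 2 * real r) * t))"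
  proof -
    have "2 * cos t * (\<Sum>r\<le>Suc n. cos ((real (Suc n) - 2 * real r) * t))
      = (\<Sum>r\<le>Suc n. 2 * cos t * cos ((real (Suc n) - 2 * real r) * t))"
      by (rule sum_distrib_left)
    also have "\<dots> = (\<Sum>r\<le>Suc n. cos ((real (Suc (Suc n)) - 2 * real r) * t) + cos ((real n - 2 * real r) * t))"
    proof (rule sum.cong)
      fix r assume "r \<in> {..Suc n}"
      have a: "real (Suc n) - 2 * real r + 1 = real (Suc (Suc n)) - 2 * real r" by simp
      have b: "real (Suc n) - 2 * real r - 1 = real n - 2 * real r" by simp
      show "2 * cos t * cos ((real (Suc n) - 2 * real r) * t) = cos ((real (Suc (Suc n)) - 2 * real r) * t) + cos ((real n - 2 * real r) * t)"
        using tr[of "real (Suc n) - 2 * real r"] unfolding a b .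
    qed simp
    finally show ?thesis by (simp add: sum.distrib)
  qed
  also have "(\<Sum>r\<le>Suc n. cos ((real n - 2 * real r) * t)) = (\<Sum>r\<le>n. cos ((real n - 2 * real r) * t)) + cos ((real n - 2 * real (Suc n)) * t)"
    by simp
  also have "cos ((real n - 2 * real (Suc n)) * t) = cos ((real (Suc (Suc n)) - 2 * real (Suc (Suc n))) * t)"
    by (simp add: algebra_simps)
  finally show ?case by simp
qed

lemma chebU_cos_sin: "chebU n (cos t) * sin t = sin ((real n + 1) * t)"
proof (induction n rule: two_induct)
  case 1 then show ?case by simp
next
  case 2 then show ?case using sin_double[of t] by (simp add: algebra_simps)
next
  case (3 n)
  have "chebU (Suc (Suc n)) (cos t) * sin t = 2 * cos t * (chebU (Suc n) (cos t) * sin t) - chebU n (cos t) * sin t"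
    by (simp add: algebra_simps)
  also have "\<dots> = 2 * cos t * sin ((real n + 2) * t) - sin ((real n + 1) * t)"
    using 3 by (simp add: algebra_simps)
  also have "\<dots> = sin ((real n + 3) * t)"
  proof -
    have "sin ((real n + 3) * t) = sin ((real n + 2) * t + t)" by (simp add: algebra_simps)
    moreover have "sin ((real n + 1) * t) = sin ((real n + 2) * t - t)" by (simp add: algebra_simps)
    ultimately show ?thesis by (simp add: sin_add sin_diff)
  qed
  finally show ?case by (simp add: algebra_simps)
qed

lemma chebU_bound: assumes "\<bar>y\<bar> \<le> 1" shows "\<bar>chebU n y\<bar> \<le> real n + 1"
proof -
  have "y = cos (arccos y)" using assms by simp
  then have "chebU n y = (\<Sum>r\<le>n. cos ((real n - 2 * real r) * arccos y))"
    by (metis chebU_cos_sum)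
  also have "\<bar>\<dots>\<bar> \<le> (\<Sum>r\<le>n. 1)"
    by (rule order_trans[OF sum_abs]) (intro sum_mono, simp)
  finally show ?thesis by simp
qed

lemma chebU_cont: "continuous_on S (chebU n)"
  by (induction n rule: two_induct) (auto intro!: continuous_intros)

lemma cos_int_integral_gen:
  fixes z :: int and a b :: real
  assumes "z \<noteq> 0" "a \<le> b" "sin (of_int z * a) = sin (of_int z * b)"
  shows "((\<lambda>t. cos (of_int z * t)) has_integral 0) {a..b}"
proof -
  have "((\<lambda>t. cos (of_int z * t)) has_integral (sin (of_int z * b) / of_int z - sin (of_int z * a) / of_int z)) {a..b}"
  proof (rule fundamental_theorem_of_calculus[OF assms(2)])
    fix x assume "x \<in> {a..b}"
    have "((\<lambda>t. sin (of_int z * t) / of_int z) has_real_derivative (cos (of_int z * x) * of_int z / of_int z)) (at x within {a..b})"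
      by (auto intro!: derivative_eq_intros)
    then show "((\<lambda>t. sin (of_int z * t) / of_int z) has_vector_derivative cos (of_int z * x)) (at x within {a..b})"
      using assms(1) by (simp add: has_real_derivative_iff_has_vector_derivative)
  qed
  then show ?thesis using assms(3) by simp
qed

lemma sin_int_pi: "sin (of_int z * pi) = 0"
  by (simp add: sin_zero_iff_int2)

lemma cos_int_0_2pi:
  fixes z :: int
  shows "((\<lambda>t. cos (of_int z * t)) has_integral (if z = 0 then 2 * pi else 0)) {0..2*pi}"
proof (cases "z = 0")
  case True
  then show ?thesis using has_integral_const_real[of "1::real" 0 "2*pi"] by simp
next
  case False
  have "sin (of_int z * (2 * pi)) = sin (of_int (2 * z) * pi)" by (simp add: algebra_simps)
  also have "\<dots> = 0" by (rule sin_int_pi)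
  finally have "sin (of_int z * 0) = sin (of_int z * (2 * pi))" by simp
  then show ?thesis using False cos_int_integral_gen[of z 0 "2*pi"] by simp
qed

lemma cos_int_mpi_0:
  fixes z :: int
  assumes "z \<noteq> 0"
  shows "((\<lambda>t. cos (of_int z * t)) has_integral 0) {-pi..0}"
proof -
  have "sin (of_int z * (-pi)) = sin (of_int (-z) * pi)" by simp
  also have "\<dots> = 0" by (rule sin_int_pi)
  finally show ?thesis using assms cos_int_integral_gen[of z "-pi" 0] by simp
qed

lemma cos4_prod:
  fixes x y z w :: real
  shows "cos x * cos y * cos z * cos w =
    (cos (x+y+z+w) + cos (x+y+z-w) + cos (x+y-z+w) + cos (x+y-z-w)
   + cos (x-y+z+w) + cos (x-y+z-w) + cos (x-y-z+w) + cos (x-y-z-w)) / 8"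
  by (simp add: cos_add sin_add cos_diff sin_diff algebra_simps)

lemma ccss_prod:
  fixes x y z w :: real
  shows "cos x * cos y * sin z * sin w =
    (cos (x+y+z-w) + cos (x+y-z+w) - cos (x+y+z+w) - cos (x+y-z-w)
   + cos (x-y+z-w) + cos (x-y-z+w) - cos (x-y+z+w) - cos (x-y-z-w)) / 8"
  by (simp add: cos_add sin_add cos_diff sin_diff algebra_simps)

lemma sqrt_subst:
  assumes F: "continuous_on {-1..1} F"
  shows "((\<lambda>t. F (cos t) * (sin t)\<^sup>2) has_integral integral {-1..1} (\<lambda>y. F y * sqrt (1 - y\<^sup>2))) {-pi..0}"
proof -
  have cf: "continuous_on {-1..1} (\<lambda>y. F y * sqrt (1 - y\<^sup>2))"
    by (intro continuous_intros F)
  have H: "((\<lambda>x. (- sin x) *\<^sub>R (\<lambda>y. F y * sqrt (1 - y\<^sup>2)) (cos x)) has_integral integral {cos (-pi)..cos 0} (\<lambda>y. F y * sqrt (1 - y\<^sup>2))) {-pi..0}"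
  proof (rule has_integral_substitution[where c="-1" and d=1])
    show "cos ` {- pi..0} \<subseteq> {- 1..1}" by auto
    show "\<And>x. x \<in> {- pi..0} \<Longrightarrow> (cos has_real_derivative - sin x) (at x within {- pi..0})"
      by (auto intro!: derivative_eq_intros)
  qed (use cf in auto)
  have E: "(- sin x) *\<^sub>R (\<lambda>y. F y * sqrt (1 - y\<^sup>2)) (cos x) = F (cos x) * (sin x)\<^sup>2" if "x \<in> {-pi..0}" for x
  proof -
    have "sin x \<le> 0" using that sin_ge_zero[of "-x"] by auto
    have "1 - (cos x)\<^sup>2 = (sin x)\<^sup>2" by (simp add: sin_squared_eq)
    then have "sqrt (1 - (cos x)\<^sup>2) = - sin x" using \<open>sin x \<le> 0\<close> by simp
    then show ?thesis by (simp add: power2_eq_square)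
  qed
  have "((\<lambda>t. F (cos t) * (sin t)\<^sup>2) has_integral integral {cos (-pi)..cos 0} (\<lambda>y. F y * sqrt (1 - y\<^sup>2))) {-pi..0}"
    by (rule has_integral_cong[THEN iffD1, OF E H]) 
  then show ?thesis by simp
qed

lemma CC_trig:
  "((\<lambda>t. chebU i (cos t) * chebU j (cos t) * chebU k (cos t) * chebU m (cos t) * (sin t)\<^sup>2)
     has_integral (pi / 2 * CC i j k m)) {-pi..0}"
proof -
  have "continuous_on {-1..1} (\<lambda>y. chebU i y * chebU j y * chebU k y * chebU m y)"
    by (intro continuous_intros chebU_cont)
  from sqrt_subst[OF this] show ?thesis by (simp add: CC_def)
qed

lemma term_vanish:
  fixes p q A B :: int
  assumes "A - B > \<bar>p\<bar> + \<bar>q\<bar>" "B \<ge> 0"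
  shows "((\<lambda>t. cos (of_int p * t) * cos (of_int q * t) * sin (of_int A * t) * sin (of_int B * t)) has_integral 0) {-pi..0}"
proof -
  define c where "c z t = cos (of_int z * t)" for z :: int and t :: real
  have eq: "cos (of_int p * t) * cos (of_int q * t) * sin (of_int A * t) * sin (of_int B * t) =
    (c (p+q+A-B) t + c (p+q-A+B) t - c (p+q+A+B) t - c (p+q-A-B) t
   + c (p-q+A-B) t + c (p-q-A+B) t - c (p-q+A+B) t - c (p-q-A-B) t) / 8" for t
    by (simp only: c_def of_int_add of_int_diff distrib_right left_diff_distrib ccss_prod)
  have z: "(c z has_integral 0) {-pi..0}" if "z \<noteq> 0" for z
    unfolding c_def using cos_int_mpi_0[OF that] .
  have "((\<lambda>t. (c (p+q+A-B) t + c (p+q-A+B) t - c (p+q+A+B) t - c (p+q-A-B) t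
   + c (p-q+A-B) t + c (p-q-A+B) t - c (p-q+A+B) t - c (p-q-A-B) t) / 8) has_integral
     (0 + 0 - 0 - 0 + 0 + 0 - 0 - 0) / 8) {-pi..0}"
  proof -
    have ab: "p \<le> \<bar>p\<bar>" "- p \<le> \<bar>p\<bar>" "q \<le> \<bar>q\<bar>" "- q \<le> \<bar>q\<bar>" by auto
    have nz: "p+q+A-B \<noteq> 0" "p+q-A+B \<noteq> 0" "p+q+A+B \<noteq> 0" "p+q-A-B \<noteq> 0"
      "p-q+A-B \<noteq> 0" "p-q-A+B \<noteq> 0" "p-q+A+B \<noteq> 0" "p-q-A-B \<noteq> 0"
      using assms ab by linarith+
    show ?thesis
      by (intro has_integral_divide has_integral_add has_integral_diff z nz)
  qed
  then show ?thesis unfolding eq by simp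
qed

lemma CC_vanish:
  assumes "k > m + 2 * g"
  shows "CC g g k m = 0"
proof -
  define a where "a r = int g - 2 * int r" for r
  have ab: "\<bar>a r\<bar> \<le> int g" if "r \<le> g" for r using that unfolding a_def by arith
  have U: "chebU g (cos t) = (\<Sum>r\<le>g. cos (of_int (a r) * t))" for t
    unfolding chebU_cos_sum a_def by simp
  have S: "chebU n (cos t) * sin t = sin (of_int (int n + 1) * t)" for n t
    using chebU_cos_sin[of n t] by simp
  have eq: "chebU g (cos t) * chebU g (cos t) * chebU k (cos t) * chebU m (cos t) * (sin t)\<^sup>2
    = (\<Sum>r1\<le>g. \<Sum>r2\<le>g. cos (of_int (a r2) * t) * cos (of_int (a r1) * t) * sin (of_int (int k + 1) * t) * sin (of_int (int m + 1) * t))" for t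
  proof -
    have "chebU g (cos t) * chebU g (cos t) * chebU k (cos t) * chebU m (cos t) * (sin t)\<^sup>2
       = chebU g (cos t) * chebU g (cos t) * (chebU k (cos t) * sin t) * (chebU m (cos t) * sin t)"
      by (simp add: power2_eq_square algebra_simps)
    also have "\<dots> = (\<Sum>r1\<le>g. cos (of_int (a r1) * t)) * (\<Sum>r2\<le>g. cos (of_int (a r2) * t)) * sin (of_int (int k + 1) * t) * sin (of_int (int m + 1) * t)"
      unfolding U S ..
    also have "\<dots> = (\<Sum>r1\<le>g. \<Sum>r2\<le>g. cos (of_int (a r2) * t) * cos (of_int (a r1) * t) * sin (of_int (int k + 1) * t) * sin (of_int (int m + 1) * t))"
      by (simp only: sum_product sum_distrib_right sum_distrib_left mult.assoc)
    finally show ?thesis .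
  qed
  have "((\<lambda>t. \<Sum>r1\<le>g. \<Sum>r2\<le>g. cos (of_int (a r2) * t) * cos (of_int (a r1) * t) * sin (of_int (int k + 1) * t) * sin (of_int (int m + 1) * t)) has_integral (\<Sum>r1\<le>g. \<Sum>r2\<le>g. 0)) {-pi..0}"
  proof (intro has_integral_sum finite_atMost)
    fix r1 r2 assume "r1 \<in> {..g}" "r2 \<in> {..g}"
    then have "\<bar>a r1\<bar> \<le> int g" "\<bar>a r2\<bar> \<le> int g" using ab by auto
    then have h12: "\<bar>a r1\<bar> \<le> int g" "\<bar>a r2\<bar> \<le> int g" .
    show "((\<lambda>t. cos (of_int (a r2) * t) * cos (of_int (a r1) * t) * sin (of_int (int k + 1) * t) * sin (of_int (int m + 1) * t)) has_integral 0) {-pi..0}"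
    proof (rule term_vanish)
      show "\<bar>a r2\<bar> + \<bar>a r1\<bar> < int k + 1 - (int m + 1)" using assms \<open>\<bar>a r1\<bar> \<le> int g\<close> \<open>\<bar>a r2\<bar> \<le> int g\<close> by linarith
    qed simp
  qed
  then have "((\<lambda>t. chebU g (cos t) * chebU g (cos t) * chebU k (cos t) * chebU m (cos t) * (sin t)\<^sup>2) has_integral 0) {-pi..0}"
    unfolding eq by simp
  with CC_trig[of g g k m] have "pi / 2 * CC g g k m = 0" using has_integral_unique by blast
  then show ?thesis by simp
qed

lemma CC_sym1: "CC i j k m = CC j i k m" unfolding CC_def by (simp add: mult_ac)
lemma CC_sym2: "CC i j k m = CC i j m k" unfolding CC_def by (simp add: mult_ac)
lemma CC_sym3: "CC i j k m = CC k m i j" unfolding CC_def by (simp add: mult_ac)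

lemma CC_bound: "\<bar>CC i j k m\<bar> \<le> 2 * ((real i + 1) * (real j + 1) * (real k + 1) * (real m + 1))"
proof -
  let ?B = "(real i + 1) * (real j + 1) * (real k + 1) * (real m + 1)"
  have bnd: "norm (chebU i (cos t) * chebU j (cos t) * chebU k (cos t) * chebU m (cos t) * (sin t)\<^sup>2) \<le> ?B" for t
  proof -
    have b: "\<bar>chebU n (cos t)\<bar> \<le> real n + 1" for n by (rule chebU_bound) simp
    have s: "(sin t)\<^sup>2 \<le> 1" by (simp add: abs_square_le_1)
    have "\<bar>chebU i (cos t) * chebU j (cos t) * chebU k (cos t) * chebU m (cos t)\<bar> \<le> ?B"
      unfolding abs_mult by (intro mult_mono b) auto
    moreover have "\<bar>(sin t)\<^sup>2\<bar> \<le> 1" using s by simp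
    ultimately have "\<bar>chebU i (cos t) * chebU j (cos t) * chebU k (cos t) * chebU m (cos t)\<bar> * \<bar>(sin t)\<^sup>2\<bar> \<le> ?B * 1"
      by (intro mult_mono) auto
    then show ?thesis by (simp add: abs_mult)
  qed
  have "norm (pi / 2 * CC i j k m) \<le> ?B * pi"
    using has_integral_bound_real[OF _ _ CC_trig[of i j k m], of ?B "{}"] bnd by simp
  then have "pi / 2 * \<bar>CC i j k m\<bar> \<le> ?B * pi" by (simp add: abs_mult)
  then have "pi * \<bar>CC i j k m\<bar> \<le> pi * (2 * ?B)" by (simp only: mult_ac)
  then show ?thesis using pi_gt_zero by (simp only: mult_le_cancel_left_pos)
qed

lemma CC_pos: "CC g g g g > 0"
proof -
  define f where "f y = chebU g y * chebU g y * chebU g y * chebU g y * sqrt (1 - y\<^sup>2)" for y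
  have cf: "continuous_on {-1..1} f" unfolding f_def by (intro continuous_intros chebU_cont)
  have nn: "f y \<ge> 0" if "y \<in> {-1..1}" for y
  proof -
    have "y\<^sup>2 \<le> 1" using that by (auto simp: abs_square_le_1)
    then have s: "sqrt (1 - y\<^sup>2) \<ge> 0" by simp
    have "f y = (chebU g y * chebU g y) * (chebU g y * chebU g y) * sqrt (1 - y\<^sup>2)" unfolding f_def by (simp add: mult.assoc)
    also have "\<dots> \<ge> 0" using s by (intro mult_nonneg_nonneg zero_le_square) auto
    finally show ?thesis .
  qed
  define th where "th = pi / (2 * (real g + 1))"
  have th0: "0 < th" "th < pi" unfolding th_def using pi_gt_zero by (auto simp: field_simps intro: add_pos_nonneg)
  then have sth: "sin th > 0" by (simp add: sin_gt_zero)
  have "(real g + 1) * th = pi / 2" unfolding th_def by (simp add: field_simps)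
  then have "chebU g (cos th) * sin th = 1" using chebU_cos_sin[of g th] by (simp only: sin_pi_half)
  then have U0: "chebU g (cos th) \<noteq> 0" by auto
  have "1 - (cos th)\<^sup>2 = (sin th)\<^sup>2" by (simp add: sin_squared_eq)
  then have "sqrt (1 - (cos th)\<^sup>2) = sin th" using sth by simp
  then have f0: "f (cos th) \<noteq> 0" unfolding f_def using U0 sth by simp
  have int: "(f has_integral integral {-1..1} f) {-1..1}"
    using integrable_continuous_interval[OF cf] by (simp add: integrable_integral)
  have ge: "integral {-1..1} f \<ge> 0"
    by (rule integral_nonneg) (use integrable_continuous_interval[OF cf] nn in auto)
  have ne: "integral {-1..1} f \<noteq> 0"
  proof
    assume z: "integral {-1..1} f = 0"
    have "f (cos th) = 0"
    proof (rule has_integral_0_cbox_imp_0[of "-1" 1 f])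
      show "continuous_on (cbox (- 1) 1) f" using cf by simp
      show "(f has_integral 0) (cbox (- 1) 1)" using int z by simp
    qed (use nn in \<open>auto simp: abs_le_iff\<close>)
    with f0 show False by simp
  qed
  have "CC g g g g = 2 / pi * integral {-1..1} f" unfolding CC_def f_def ..
  with ge ne show ?thesis by simp
qed

definition Wsp :: "(nat \<Rightarrow> real) \<Rightarrow> bool" where
  "Wsp a \<longleftrightarrow> (\<lambda>i. (real i + 1) * \<bar>a i\<bar>) summable_on UNIV"

lemma prod3_summable:
  fixes p q r :: "nat \<Rightarrow> real"
  assumes p0: "\<And>i. p i \<ge> 0" and q0: "\<And>i. q i \<ge> 0" and r0: "\<And>i. r i \<ge> 0"
    and ps: "p summable_on UNIV" and qs: "q summable_on UNIV" and rs: "r summable_on UNIV"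
  shows "(\<lambda>(i,j,k). p i * q j * r k) summable_on UNIV"
proof (rule nonneg_bdd_above_summable_on)
  show "\<And>x. x \<in> UNIV \<Longrightarrow> 0 \<le> (case x of (i, j, k) \<Rightarrow> p i * q j * r k)"
    using p0 q0 r0 by (auto simp: case_prod_beta)
  show "bdd_above (sum (\<lambda>(i, j, k). p i * q j * r k) ` {F. F \<subseteq> UNIV \<and> finite F})"
  proof (rule bdd_aboveI2)
    fix F :: "(nat \<times> nat \<times> nat) set" assume "F \<in> {F. F \<subseteq> UNIV \<and> finite F}"
    then have fF: "finite F" by simp
    define I where "I = fst ` F"
    define J where "J = (fst \<circ> snd) ` F"
    define K where "K = (snd \<circ> snd) ` F"
    have fin: "finite I" "finite J" "finite K" using fF unfolding I_def J_def K_def by auto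
    have sub: "F \<subseteq> I \<times> (J \<times> K)" unfolding I_def J_def K_def by force
    have "sum (\<lambda>(i, j, k). p i * q j * r k) F \<le> sum (\<lambda>(i, j, k). p i * q j * r k) (I \<times> (J \<times> K))"
      by (rule sum_mono2) (use fin sub p0 q0 r0 in \<open>auto simp: case_prod_beta\<close>)
    also have "\<dots> = sum p I * (sum q J * sum r K)"
      by (simp add: sum_product sum.cartesian_product mult.assoc case_prod_beta)
    also have "\<dots> \<le> infsum p UNIV * (infsum q UNIV * infsum r UNIV)"
    proof -
      have a: "sum p I \<le> infsum p UNIV" by (rule finite_sum_le_infsum) (use ps fin p0 in auto)
      have b: "sum q J \<le> infsum q UNIV" by (rule finite_sum_le_infsum) (use qs fin q0 in auto)
      have c: "sum r K \<le> infsum r UNIV" by (rule finite_sum_le_infsum) (use rs fin r0 in auto)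
      have "0 \<le> sum q J" "0 \<le> sum r K" "0 \<le> sum p I" using p0 q0 r0 by (auto intro: sum_nonneg)
      then show ?thesis using a b c by (intro mult_mono) (auto intro: mult_nonneg_nonneg order.trans)
    qed
    finally show "sum (\<lambda>(i, j, k). p i * q j * r k) F \<le> infsum p UNIV * (infsum q UNIV * infsum r UNIV)" .
  qed
qed

lemma infsum_cont:
  fixes f :: "'a \<Rightarrow> real \<Rightarrow> real" and h :: "'a \<Rightarrow> real"
  assumes cont: "\<And>x. continuous_on S (f x)" and hs: "h summable_on A"
    and bd: "\<And>x t. x \<in> A \<Longrightarrow> t \<in> S \<Longrightarrow> \<bar>f x t\<bar> \<le> h x"
  shows "continuous_on S (\<lambda>t. infsum (\<lambda>x. f x t) A)"
proof (rule uniform_limit_theorem)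
  have fs: "(\<lambda>x. f x t) summable_on A" if "t \<in> S" for t
  proof -
    have "(\<lambda>x. norm (f x t)) summable_on A"
      by (rule summable_on_comparison_test[OF hs]) (use bd that in auto)
    then show ?thesis by (rule abs_summable_summable)
  qed
  show "uniform_limit S (\<lambda>F t. sum (\<lambda>x. f x t) F) (\<lambda>t. infsum (\<lambda>x. f x t) A) (finite_subsets_at_top A)"
  proof (rule uniform_limitI)
    fix e :: real assume e: "e > 0"
    have "\<forall>\<^sub>F F in finite_subsets_at_top A. dist (sum h F) (infsum h A) < e"
      using tendstoD[OF infsum_tendsto[OF hs] e] .
    moreover have "\<forall>\<^sub>F F in finite_subsets_at_top A. finite F \<and> F \<subseteq> A"
      by (rule eventually_finite_subsets_at_top_weakI) auto
    ultimately show "\<forall>\<^sub>F F in finite_subsets_at_top A. \<forall>t\<in>S. dist (sum (\<lambda>x. f x t) F) (infsum (\<lambda>x. f x t) A) < e"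
    proof eventually_elim
      case (elim F)
      then have fF: "finite F" "F \<subseteq> A" and dh: "dist (sum h F) (infsum h A) < e" by auto
      show ?case
      proof
        fix t assume t: "t \<in> S"
        have "infsum (\<lambda>x. f x t) (A - F) = infsum (\<lambda>x. f x t) A - infsum (\<lambda>x. f x t) F"
          by (rule infsum_Diff) (use fs[OF t] fF in auto)
        then have d1: "infsum (\<lambda>x. f x t) A - sum (\<lambda>x. f x t) F = infsum (\<lambda>x. f x t) (A - F)"
          using fF by simp
        have "infsum h (A - F) = infsum h A - infsum h F"
          by (rule infsum_Diff) (use hs fF in auto)
        then have d2: "infsum h (A - F) = infsum h A - sum h F" using fF by simp
        have "norm (infsum (\<lambda>x. f x t) (A - F)) \<le> infsum h (A - F)"
          by (rule norm_infsum_le[OF has_sum_infsum has_sum_infsum])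
             (use summable_on_subset_banach[OF fs[OF t]] summable_on_subset_banach[OF hs] bd t in auto)
        then show "dist (sum (\<lambda>x. f x t) F) (infsum (\<lambda>x. f x t) A) < e"
          using d1 d2 dh by (simp add: dist_real_def abs_minus_commute)
      qed
    qed
  qed
  show "\<forall>\<^sub>F F in finite_subsets_at_top A. continuous_on S (\<lambda>t. sum (\<lambda>x. f x t) F)"
    by (intro always_eventually allI continuous_on_sum cont)
  show "\<not> trivial_limit (finite_subsets_at_top A)" by (simp add: finite_subsets_at_top_neq_bot)
qed

definition Gm :: "nat \<Rightarrow> (nat \<Rightarrow> real) \<Rightarrow> (nat \<Rightarrow> real) \<Rightarrow> (nat \<Rightarrow> real) \<Rightarrow> real" where
  "Gm m p q r = infsum (\<lambda>(i,j,k). CC i j k m * p i * q j * r k) UNIV"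

lemma fnl_G: "fnl u m = - Gm m u u u" by (simp add: fnl_def Gm_def)

definition hb :: "nat \<Rightarrow> (nat \<Rightarrow> real) \<Rightarrow> (nat \<Rightarrow> real) \<Rightarrow> (nat \<Rightarrow> real) \<Rightarrow> nat \<times> nat \<times> nat \<Rightarrow> real" where
  "hb m a b c = (\<lambda>(i,j,k). (2 * (real m + 1)) * (((real i + 1) * \<bar>a i\<bar>) * ((real j + 1) * \<bar>b j\<bar>) * ((real k + 1) * \<bar>c k\<bar>)))"

lemma hb_summable: assumes "Wsp a" "Wsp b" "Wsp c" shows "hb m a b c summable_on UNIV"
proof -
  have "(\<lambda>(i,j,k). ((real i + 1) * \<bar>a i\<bar>) * ((real j + 1) * \<bar>b j\<bar>) * ((real k + 1) * \<bar>c k\<bar>)) summable_on UNIV"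
    by (rule prod3_summable) (use assms in \<open>auto simp: Wsp_def\<close>)
  then have "(\<lambda>x. (2 * (real m + 1)) * (case x of (i,j,k) \<Rightarrow> ((real i + 1) * \<bar>a i\<bar>) * ((real j + 1) * \<bar>b j\<bar>) * ((real k + 1) * \<bar>c k\<bar>))) summable_on UNIV"
    by (rule summable_on_cmult_right)
  moreover have "hb m a b c = (\<lambda>x. (2 * (real m + 1)) * (case x of (i,j,k) \<Rightarrow> ((real i + 1) * \<bar>a i\<bar>) * ((real j + 1) * \<bar>b j\<bar>) * ((real k + 1) * \<bar>c k\<bar>)))"
    by (rule ext) (auto simp: hb_def split: prod.splits)
  ultimately show ?thesis by simp
qed

lemma hb_bound:
  assumes "\<bar>p i\<bar> \<le> \<bar>a i\<bar>" "\<bar>q j\<bar> \<le> \<bar>b j\<bar>" "\<bar>r k\<bar> \<le> \<bar>c k\<bar>"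
  shows "\<bar>CC i j k m * p i * q j * r k\<bar> \<le> hb m a b c (i,j,k)"
proof -
  have "\<bar>CC i j k m * p i * q j * r k\<bar> = \<bar>CC i j k m\<bar> * (\<bar>p i\<bar> * \<bar>q j\<bar> * \<bar>r k\<bar>)" by (simp add: abs_mult)
  also have "\<dots> \<le> (2 * ((real i + 1) * (real j + 1) * (real k + 1) * (real m + 1))) * (\<bar>a i\<bar> * \<bar>b j\<bar> * \<bar>c k\<bar>)"
    by (intro mult_mono CC_bound assms) auto
  also have "\<dots> = hb m a b c (i,j,k)" unfolding hb_def by (simp add: algebra_simps)
  finally show ?thesis .
qed

lemma G_summable:
  assumes "Wsp a" "Wsp b" "Wsp c" "\<And>i. \<bar>p i\<bar> \<le> \<bar>a i\<bar>" "\<And>i. \<bar>q i\<bar> \<le> \<bar>b i\<bar>" "\<And>i. \<bar>r i\<bar> \<le> \<bar>c i\<bar>"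
  shows "(\<lambda>(i,j,k). CC i j k m * p i * q j * r k) summable_on UNIV"
proof -
  have "(\<lambda>x. norm ((\<lambda>(i,j,k). CC i j k m * p i * q j * r k) x)) summable_on UNIV"
    by (rule summable_on_comparison_test[OF hb_summable[OF assms(1-3), of m]])
       (use hb_bound assms(4-6) in auto)
  then show ?thesis by (rule abs_summable_summable)
qed

lemma Phi_bound: "\<bar>Phi t a i\<bar> \<le> \<bar>a i\<bar>"
  unfolding Phi_def abs_mult by (rule mult_left_le) auto

lemma G_cont:
  assumes "Wsp a" "Wsp b" "Wsp c"
  shows "continuous_on UNIV (\<lambda>t. Gm m (Phi t a) (Phi t b) (Phi t c))"
proof -
  have "continuous_on UNIV (\<lambda>t. infsum (\<lambda>x. (\<lambda>x t. case x of (i,j,k) \<Rightarrow> CC i j k m * Phi t a i * Phi t b j * Phi t c k) x t) UNIV)"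
  proof (rule infsum_cont[OF _ hb_summable[OF assms, of m]])
    fix x :: "nat \<times> nat \<times> nat"
    show "continuous_on UNIV (\<lambda>t. case x of (i,j,k) \<Rightarrow> CC i j k m * Phi t a i * Phi t b j * Phi t c k)"
      by (cases x) (auto simp: Phi_def intro!: continuous_intros)
  next
    fix x :: "nat \<times> nat \<times> nat" and t :: real
    show "\<bar>case x of (i,j,k) \<Rightarrow> CC i j k m * Phi t a i * Phi t b j * Phi t c k\<bar> \<le> hb m a b c x"
      by (cases x) (simp add: hb_bound Phi_bound)
  qed
  then show ?thesis unfolding Gm_def .
qed

lemma Wsp_comb: assumes "Wsp a" "Wsp b" shows "Wsp (\<lambda>i. a i + e * b i)"
proof -
  have "(\<lambda>i. (real i + 1) * \<bar>a i\<bar> + \<bar>e\<bar> * ((real i + 1) * \<bar>b i\<bar>)) summable_on UNIV"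
    using assms unfolding Wsp_def by (intro summable_on_add summable_on_cmult_right)
  then show ?thesis unfolding Wsp_def
  proof (rule summable_on_comparison_test)
    fix i :: nat
    have "\<bar>a i + e * b i\<bar> \<le> \<bar>a i\<bar> + \<bar>e\<bar> * \<bar>b i\<bar>" by (simp add: abs_triangle_ineq[THEN order_trans] abs_mult)
    then have "(real i + 1) * \<bar>a i + e * b i\<bar> \<le> (real i + 1) * (\<bar>a i\<bar> + \<bar>e\<bar> * \<bar>b i\<bar>)"
      by (intro mult_left_mono) auto
    then show "(real i + 1) * \<bar>a i + e * b i\<bar> \<le> (real i + 1) * \<bar>a i\<bar> + \<bar>e\<bar> * ((real i + 1) * \<bar>b i\<bar>)"
      by (simp add: algebra_simps)
  qed auto
qed

lemma infsum_lin:
  fixes f g :: "'a \<Rightarrow> real"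
  assumes "f summable_on A" "g summable_on A"
  shows "infsum (\<lambda>x. f x + e * g x) A = infsum f A + e * infsum g A"
  using assms by (simp add: infsum_add summable_on_cmult_right infsum_cmult_right)

lemma G_lin1:
  assumes "Wsp a" "Wsp a'" "Wsp b" "Wsp c" "\<And>i. \<bar>p i\<bar> \<le> \<bar>a i\<bar>" "\<And>i. \<bar>p' i\<bar> \<le> \<bar>a' i\<bar>"
    "\<And>i. \<bar>q i\<bar> \<le> \<bar>b i\<bar>" "\<And>i. \<bar>r i\<bar> \<le> \<bar>c i\<bar>"
  shows "Gm m (\<lambda>i. p i + e * p' i) q r = Gm m p q r + e * Gm m p' q r"
proof -
  have s1: "(\<lambda>(i,j,k). CC i j k m * p i * q j * r k) summable_on UNIV"
    by (rule G_summable[of a b c p q r]) (use assms in auto)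
  have s2: "(\<lambda>(i,j,k). CC i j k m * p' i * q j * r k) summable_on UNIV"
    by (rule G_summable[of a' b c p' q r]) (use assms in auto)
  have "Gm m (\<lambda>i. p i + e * p' i) q r = infsum (\<lambda>x. (\<lambda>(i,j,k). CC i j k m * p i * q j * r k) x + e * (\<lambda>(i,j,k). CC i j k m * p' i * q j * r k) x) UNIV"
    unfolding Gm_def by (rule infsum_cong) (auto simp: algebra_simps)
  also have "\<dots> = Gm m p q r + e * Gm m p' q r"
    unfolding Gm_def by (rule infsum_lin[OF s1 s2])
  finally show ?thesis .
qed

lemma G_lin2:
  assumes "Wsp a" "Wsp b'" "Wsp b" "Wsp c" "\<And>i. \<bar>p i\<bar> \<le> \<bar>a i\<bar>" "\<And>i. \<bar>q' i\<bar> \<le> \<bar>b' i\<bar>"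
    "\<And>i. \<bar>q i\<bar> \<le> \<bar>b i\<bar>" "\<And>i. \<bar>r i\<bar> \<le> \<bar>c i\<bar>"
  shows "Gm m p (\<lambda>i. q i + e * q' i) r = Gm m p q r + e * Gm m p q' r"
proof -
  have s1: "(\<lambda>(i,j,k). CC i j k m * p i * q j * r k) summable_on UNIV"
    by (rule G_summable[of a b c p q r]) (use assms in auto)
  have s2: "(\<lambda>(i,j,k). CC i j k m * p i * q' j * r k) summable_on UNIV"
    by (rule G_summable[of a b' c p q' r]) (use assms in auto)
  have "Gm m p (\<lambda>i. q i + e * q' i) r = infsum (\<lambda>x. (\<lambda>(i,j,k). CC i j k m * p i * q j * r k) x + e * (\<lambda>(i,j,k). CC i j k m * p i * q' j * r k) x) UNIV"
    unfolding Gm_def by (rule infsum_cong) (auto simp: algebra_simps)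
  also have "\<dots> = Gm m p q r + e * Gm m p q' r"
    unfolding Gm_def by (rule infsum_lin[OF s1 s2])
  finally show ?thesis .
qed

lemma G_lin3:
  assumes "Wsp a" "Wsp c'" "Wsp b" "Wsp c" "\<And>i. \<bar>p i\<bar> \<le> \<bar>a i\<bar>" "\<And>i. \<bar>r' i\<bar> \<le> \<bar>c' i\<bar>"
    "\<And>i. \<bar>q i\<bar> \<le> \<bar>b i\<bar>" "\<And>i. \<bar>r i\<bar> \<le> \<bar>c i\<bar>"
  shows "Gm m p q (\<lambda>i. r i + e * r' i) = Gm m p q r + e * Gm m p q r'"
proof -
  have s1: "(\<lambda>(i,j,k). CC i j k m * p i * q j * r k) summable_on UNIV"
    by (rule G_summable[of a b c p q r]) (use assms in auto)
  have s2: "(\<lambda>(i,j,k). CC i j k m * p i * q j * r' k) summable_on UNIV"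
    by (rule G_summable[of a b c' p q r']) (use assms in auto)
  have "Gm m p q (\<lambda>i. r i + e * r' i) = infsum (\<lambda>x. (\<lambda>(i,j,k). CC i j k m * p i * q j * r k) x + e * (\<lambda>(i,j,k). CC i j k m * p i * q j * r' k) x) UNIV"
    unfolding Gm_def by (rule infsum_cong) (auto simp: algebra_simps)
  also have "\<dots> = Gm m p q r + e * Gm m p q r'"
    unfolding Gm_def by (rule infsum_lin[OF s1 s2])
  finally show ?thesis .
qed

lemma Phi_lin: "Phi t (\<lambda>j. a j + e * b j) = (\<lambda>i. Phi t a i + e * Phi t b i)"
  by (rule ext) (simp add: Phi_def algebra_simps)

lemma PhiV_bound: "\<bar>Phi t a i + e * Phi t b i\<bar> \<le> \<bar>a i + e * b i\<bar>"
  using Phi_bound[of t "\<lambda>j. a j + e * b j" i] by (simp add: Phi_lin)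

lemma G_expand:
  fixes t e :: real
  assumes xi: "Wsp \<xi>" and eta: "Wsp \<eta>"
  defines "X \<equiv> Phi t \<xi>" and "Y \<equiv> Phi t \<eta>"
  shows "Gm m (Phi t (\<lambda>j. \<xi> j + e * \<eta> j)) (Phi t (\<lambda>j. \<xi> j + e * \<eta> j)) (Phi t (\<lambda>j. \<xi> j + e * \<eta> j))
    = Gm m X X X + e * (Gm m Y X X + Gm m X Y X + Gm m X X Y)
      + e\<^sup>2 * (Gm m X Y Y + Gm m Y X Y + Gm m Y Y X) + e ^ 3 * Gm m Y Y Y"
proof -
  define v where "v = (\<lambda>j. \<xi> j + e * \<eta> j)"
  define V where "V = (\<lambda>i. X i + e * Y i)"
  have wv: "Wsp v" unfolding v_def by (rule Wsp_comb[OF xi eta])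
  have PV: "Phi t v = V" unfolding V_def v_def X_def Y_def by (rule Phi_lin)
  have bX: "\<And>i. \<bar>X i\<bar> \<le> \<bar>\<xi> i\<bar>" unfolding X_def by (rule Phi_bound)
  have bY: "\<And>i. \<bar>Y i\<bar> \<le> \<bar>\<eta> i\<bar>" unfolding Y_def by (rule Phi_bound)
  have bV: "\<And>i. \<bar>V i\<bar> \<le> \<bar>v i\<bar>" unfolding V_def v_def X_def Y_def by (rule PhiV_bound)
  have e1: "Gm m V V V = Gm m X V V + e * Gm m Y V V"
    unfolding V_def[of] by (rule G_lin1[of \<xi> \<eta> v v]) (use xi eta wv bX bY bV[unfolded V_def] in auto)
  have e2: "Gm m X V V = Gm m X X V + e * Gm m X Y V"
    unfolding V_def by (rule G_lin2[of \<xi> \<eta> \<xi> v]) (use xi eta wv bX bY bV[unfolded V_def] in auto)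
  have e3: "Gm m Y V V = Gm m Y X V + e * Gm m Y Y V"
    unfolding V_def by (rule G_lin2[of \<eta> \<eta> \<xi> v]) (use xi eta wv bX bY bV[unfolded V_def] in auto)
  have e4: "Gm m X X V = Gm m X X X + e * Gm m X X Y"
    unfolding V_def by (rule G_lin3[of \<xi> \<eta> \<xi> \<xi>]) (use xi eta wv bX bY in auto)
  have e5: "Gm m X Y V = Gm m X Y X + e * Gm m X Y Y"
    unfolding V_def by (rule G_lin3[of \<xi> \<eta> \<eta> \<xi>]) (use xi eta wv bX bY in auto)
  have e6: "Gm m Y X V = Gm m Y X X + e * Gm m Y X Y"
    unfolding V_def by (rule G_lin3[of \<eta> \<eta> \<xi> \<xi>]) (use xi eta wv bX bY in auto)
  have e7: "Gm m Y Y V = Gm m Y Y X + e * Gm m Y Y Y"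
    unfolding V_def by (rule G_lin3[of \<eta> \<eta> \<eta> \<xi>]) (use xi eta wv bX bY in auto)
  have "Gm m V V V = Gm m X X X + e * (Gm m Y X X + Gm m X Y X + Gm m X X Y)
      + e\<^sup>2 * (Gm m X Y Y + Gm m Y X Y + Gm m Y Y X) + e ^ 3 * Gm m Y Y Y"
    unfolding e1 e2 e3 e4 e5 e6 e7 by (simp add: algebra_simps power2_eq_square power3_eq_cube)
  then show ?thesis using PV unfolding v_def by simp
qed

lemma cont_int:
  assumes "continuous_on UNIV f"
  shows "((\<lambda>t. f t * cos (om m * t)) has_integral integral {0..2*pi} (\<lambda>t. f t * cos (om m * t))) {0..2*pi}"
proof -
  have "continuous_on {0..2*pi} (\<lambda>t. f t * cos (om m * t))"
    by (intro continuous_intros continuous_on_subset[OF assms]) auto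
  then show ?thesis using integrable_continuous_interval integrable_integral by blast
qed

lemma dM_general:
  assumes xi: "Wsp \<xi>" and eta: "Wsp \<eta>"
  shows "dM \<xi> \<eta> m = (om m)\<^sup>2 * \<eta> m - integral {0..2*pi} (\<lambda>t. (Gm m (Phi t \<eta>) (Phi t \<xi>) (Phi t \<xi>) + Gm m (Phi t \<xi>) (Phi t \<eta>) (Phi t \<xi>) + Gm m (Phi t \<xi>) (Phi t \<xi>) (Phi t \<eta>)) * cos (om m * t)) / (2*pi)"
proof -
  define c where "c t = cos (om m * t)" for t
  define G0 where "G0 t = Gm m (Phi t \<xi>) (Phi t \<xi>) (Phi t \<xi>)" for t
  define G1 where "G1 t = Gm m (Phi t \<eta>) (Phi t \<xi>) (Phi t \<xi>) + Gm m (Phi t \<xi>) (Phi t \<eta>) (Phi t \<xi>) + Gm m (Phi t \<xi>) (Phi t \<xi>) (Phi t \<eta>)" for t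
  define G2 where "G2 t = Gm m (Phi t \<xi>) (Phi t \<eta>) (Phi t \<eta>) + Gm m (Phi t \<eta>) (Phi t \<xi>) (Phi t \<eta>) + Gm m (Phi t \<eta>) (Phi t \<eta>) (Phi t \<xi>)" for t
  define G3 where "G3 t = Gm m (Phi t \<eta>) (Phi t \<eta>) (Phi t \<eta>)" for t
  have c0: "continuous_on UNIV G0" unfolding G0_def by (intro G_cont xi eta)
  have c1: "continuous_on UNIV G1" unfolding G1_def by (intro continuous_on_add G_cont xi eta)
  have c2: "continuous_on UNIV G2" unfolding G2_def by (intro continuous_on_add G_cont xi eta)
  have c3: "continuous_on UNIV G3" unfolding G3_def by (intro G_cont xi eta)
  define I0 where "I0 = integral {0..2*pi} (\<lambda>t. G0 t * c t)"
  define I1 where "I1 = integral {0..2*pi} (\<lambda>t. G1 t * c t)"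
  define I2 where "I2 = integral {0..2*pi} (\<lambda>t. G2 t * c t)"
  define I3 where "I3 = integral {0..2*pi} (\<lambda>t. G3 t * c t)"
  have i0: "((\<lambda>t. G0 t * c t) has_integral I0) {0..2*pi}" unfolding I0_def c_def by (rule cont_int[OF c0])
  have i1: "((\<lambda>t. G1 t * c t) has_integral I1) {0..2*pi}" unfolding I1_def c_def by (rule cont_int[OF c1])
  have i2: "((\<lambda>t. G2 t * c t) has_integral I2) {0..2*pi}" unfolding I2_def c_def by (rule cont_int[OF c2])
  have i3: "((\<lambda>t. G3 t * c t) has_integral I3) {0..2*pi}" unfolding I3_def c_def by (rule cont_int[OF c3])
  have MMe: "MM (\<lambda>j. \<xi> j + e * \<eta> j) m = (om m)\<^sup>2 * \<xi> m + e * ((om m)\<^sup>2 * \<eta> m) - (I0 + e * I1 + e\<^sup>2 * I2 + e ^ 3 * I3) / (2 * pi)" for e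
  proof -
    have H: "((\<lambda>t. - (G0 t * c t + e * (G1 t * c t) + e\<^sup>2 * (G2 t * c t) + e ^ 3 * (G3 t * c t))) has_integral
       - (I0 + e * I1 + e\<^sup>2 * I2 + e ^ 3 * I3)) {0..2*pi}"
      by (intro has_integral_neg has_integral_add has_integral_mult_right i0 i1 i2 i3)
    have pw: "Phi t (fnl (Phi t (\<lambda>j. \<xi> j + e * \<eta> j))) m = - (G0 t * c t + e * (G1 t * c t) + e\<^sup>2 * (G2 t * c t) + e ^ 3 * (G3 t * c t))" for t
    proof -
      have "Phi t (fnl (Phi t (\<lambda>j. \<xi> j + e * \<eta> j))) m = - Gm m (Phi t (\<lambda>j. \<xi> j + e * \<eta> j)) (Phi t (\<lambda>j. \<xi> j + e * \<eta> j)) (Phi t (\<lambda>j. \<xi> j + e * \<eta> j)) * c t"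
        unfolding Phi_def[of t "fnl _"] fnl_G c_def by simp
      also have "\<dots> = - (G0 t + e * G1 t + e\<^sup>2 * G2 t + e ^ 3 * G3 t) * c t"
        unfolding G_expand[OF xi eta] G0_def G1_def G2_def G3_def ..
      finally show ?thesis by (simp add: algebra_simps)
    qed
    have "((\<lambda>t. Phi t (fnl (Phi t (\<lambda>j. \<xi> j + e * \<eta> j))) m) has_integral - (I0 + e * I1 + e\<^sup>2 * I2 + e ^ 3 * I3)) {0..2*pi}"
      unfolding pw by (rule H)
    then have "integral {0..2*pi} (\<lambda>t. Phi t (fnl (Phi t (\<lambda>j. \<xi> j + e * \<eta> j))) m) = - (I0 + e * I1 + e\<^sup>2 * I2 + e ^ 3 * I3)"
      by (rule integral_unique)
    note ie = this
    show ?thesis unfolding MM_def ie by (simp add: field_simps)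
  qed
  have fe: "(\<lambda>e. MM (\<lambda>j. \<xi> j + e * \<eta> j) m) = (\<lambda>e. (om m)\<^sup>2 * \<xi> m + e * ((om m)\<^sup>2 * \<eta> m) - (I0 + e * I1 + e\<^sup>2 * I2 + e ^ 3 * I3) / (2 * pi))"
    by (rule ext) (rule MMe)
  have D: "((\<lambda>e. (om m)\<^sup>2 * \<xi> m + e * ((om m)\<^sup>2 * \<eta> m) - (I0 + e * I1 + e\<^sup>2 * I2 + e ^ 3 * I3) / (2 * pi))
      has_real_derivative ((om m)\<^sup>2 * \<eta> m - I1 / (2 * pi))) (at 0)"
    by (auto intro!: derivative_eq_intros simp: algebra_simps)
  have "dM \<xi> \<eta> m = (om m)\<^sup>2 * \<eta> m - I1 / (2 * pi)"
    unfolding dM_def fe by (rule DERIV_imp_deriv[OF D])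
  then show ?thesis unfolding I1_def G1_def c_def .
qed

lemma Wsp_fin:
  assumes "finite S" "\<And>i. i \<notin> S \<Longrightarrow> a i = 0"
  shows "Wsp a"
proof -
  have "(\<lambda>i. (real i + 1) * \<bar>a i\<bar>) summable_on UNIV \<longleftrightarrow> (\<lambda>i. (real i + 1) * \<bar>a i\<bar>) summable_on S"
    by (rule summable_on_cong_neutral) (use assms in auto)
  then show ?thesis unfolding Wsp_def using assms(1) by simp
qed

lemma G_supp3:
  assumes "\<And>i. i \<noteq> g \<Longrightarrow> p i = 0" "\<And>j. j \<noteq> g \<Longrightarrow> q j = 0"
  shows "Gm m p q r = infsum (\<lambda>k. CC g g k m * p g * q g * r k) UNIV"
proof -
  let ?f = "\<lambda>(i,j,k). CC i j k m * p i * q j * r k"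
  have "Gm m p q r = infsum ?f (range (\<lambda>k::nat. (g,g,k)))"
    unfolding Gm_def
  proof (rule infsum_cong_neutral)
    fix x assume x: "x \<in> UNIV - range (\<lambda>k::nat. (g,g,k))"
    obtain i j k where xe: "x = (i,j,k)" by (cases x) auto
    show "?f x = 0"
    proof (cases "i = g \<and> j = g \<and> k = g")
      case True then show ?thesis using x xe by auto
    next
      case False then show ?thesis using x xe assms by auto
    qed
  qed auto
  also have "\<dots> = infsum (?f \<circ> (\<lambda>k::nat. (g,g,k))) UNIV"
    by (rule infsum_reindex) (auto simp: inj_on_def)
  finally show ?thesis by (simp add: comp_def)
qed

lemma G_supp1:
  assumes "\<And>i. i \<noteq> g \<Longrightarrow> q i = 0" "\<And>j. j \<noteq> g \<Longrightarrow> r j = 0"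
  shows "Gm m p q r = infsum (\<lambda>k. CC k g g m * p k * q g * r g) UNIV"
proof -
  let ?f = "\<lambda>(i,j,k). CC i j k m * p i * q j * r k"
  have "Gm m p q r = infsum ?f (range (\<lambda>k::nat. (k,g,g)))"
    unfolding Gm_def
  proof (rule infsum_cong_neutral)
    fix x assume x: "x \<in> UNIV - range (\<lambda>k::nat. (k,g,g))"
    obtain i j k where xe: "x = (i,j,k)" by (cases x) auto
    show "?f x = 0"
    proof (cases "i = g \<and> j = g \<and> k = g")
      case True then show ?thesis using x xe by auto
    next
      case False then show ?thesis using x xe assms by auto
    qed
  qed auto
  also have "\<dots> = infsum (?f \<circ> (\<lambda>k::nat. (k,g,g))) UNIV"
    by (rule infsum_reindex) (auto simp: inj_on_def)
  finally show ?thesis by (simp add: comp_def)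
qed

lemma G_supp2:
  assumes "\<And>i. i \<noteq> g \<Longrightarrow> p i = 0" "\<And>j. j \<noteq> g \<Longrightarrow> r j = 0"
  shows "Gm m p q r = infsum (\<lambda>k. CC g k g m * p g * q k * r g) UNIV"
proof -
  let ?f = "\<lambda>(i,j,k). CC i j k m * p i * q j * r k"
  have "Gm m p q r = infsum ?f (range (\<lambda>k::nat. (g,k,g)))"
    unfolding Gm_def
  proof (rule infsum_cong_neutral)
    fix x assume x: "x \<in> UNIV - range (\<lambda>k::nat. (g,k,g))"
    obtain i j k where xe: "x = (i,j,k)" by (cases x) auto
    show "?f x = 0"
    proof (cases "i = g \<and> j = g \<and> k = g")
      case True then show ?thesis using x xe by auto
    next
      case False then show ?thesis using x xe assms by auto
    qed
  qed auto
  also have "\<dots> = infsum (?f \<circ> (\<lambda>k::nat. (g,k,g))) UNIV"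
    by (rule infsum_reindex) (auto simp: inj_on_def)
  finally show ?thesis by (simp add: comp_def)
qed

lemma infsum_to_fin:
  assumes "\<And>k. k > m + 2 * g \<Longrightarrow> CC g g k m = 0"
  shows "infsum (\<lambda>k. CC g g k m * A * B * r k) UNIV = (\<Sum>k\<le>m + 2 * g. CC g g k m * A * B * r k)"
proof -
  have "infsum (\<lambda>k. CC g g k m * A * B * r k) UNIV = infsum (\<lambda>k. CC g g k m * A * B * r k) {..m + 2 * g}"
    by (rule infsum_cong_neutral) (use assms in \<open>auto simp: not_le\<close>)
  then show ?thesis by simp
qed

lemma v8: fixes x1 x2 x3 x4 x5 x6 x7 x8 :: real
  shows "(2 * pi * x1 + 2 * pi * x2 + 2 * pi * x3 + 2 * pi * x4 + 2 * pi * x5 + 2 * pi * x6 + 2 * pi * x7 + 2 * pi * x8) / 8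
    = pi / 4 * (x1 + x2 + x3 + x4 + x5 + x6 + x7 + x8)"
  by (simp add: field_simps)

lemma J_int:
  fixes a b c d :: int
  shows "((\<lambda>t. cos (of_int a * t) * cos (of_int b * t) * cos (of_int c * t) * cos (of_int d * t)) has_integral
     (pi / 4 * (of_bool (a+b+c+d = 0) + of_bool (a+b+c-d = 0) + of_bool (a+b-c+d = 0) + of_bool (a+b-c-d = 0)
      + of_bool (a-b+c+d = 0) + of_bool (a-b+c-d = 0) + of_bool (a-b-c+d = 0) + of_bool (a-b-c-d = 0)))) {0..2*pi}"
proof -
  define zc where "zc z t = cos (of_int z * t)" for z :: int and t :: real
  have eq: "cos (of_int a * t) * cos (of_int b * t) * cos (of_int c * t) * cos (of_int d * t) =
    (zc (a+b+c+d) t + zc (a+b+c-d) t + zc (a+b-c+d) t + zc (a+b-c-d) t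
   + zc (a-b+c+d) t + zc (a-b+c-d) t + zc (a-b-c+d) t + zc (a-b-c-d) t) / 8" for t
    by (simp only: zc_def of_int_add of_int_diff distrib_right left_diff_distrib cos4_prod)
  have z: "(zc z has_integral (2 * pi * of_bool (z = 0))) {0..2*pi}" for z
    using cos_int_0_2pi[of z] by (cases "z = 0") (simp_all add: zc_def[abs_def])
  have "((\<lambda>t. (zc (a+b+c+d) t + zc (a+b+c-d) t + zc (a+b-c+d) t + zc (a+b-c-d) t
   + zc (a-b+c+d) t + zc (a-b+c-d) t + zc (a-b-c+d) t + zc (a-b-c-d) t) / 8) has_integral
     (2 * pi * of_bool (a+b+c+d = 0) + 2 * pi * of_bool (a+b+c-d = 0) + 2 * pi * of_bool (a+b-c+d = 0) + 2 * pi * of_bool (a+b-c-d = 0)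
      + 2 * pi * of_bool (a-b+c+d = 0) + 2 * pi * of_bool (a-b+c-d = 0) + 2 * pi * of_bool (a-b-c+d = 0) + 2 * pi * of_bool (a-b-c-d = 0)) / 8) {0..2*pi}"
    by (intro has_integral_divide has_integral_add z)
  then show ?thesis unfolding eq v8 .
qed

definition Jv :: "nat \<Rightarrow> nat \<Rightarrow> nat \<Rightarrow> real" where
  "Jv g k m = pi / 4 * (2 * of_bool (k = m) + of_bool (k = m + 2 * g + 2) + of_bool (m = k + 2 * g + 2) + of_bool (m + k = 2 * g))"

lemma J_nat:
  "((\<lambda>t. cos (om g * t) * cos (om g * t) * cos (om k * t) * cos (om m * t)) has_integral Jv g k m) {0..2*pi}"
proof -
  have o: "om n = of_int (int n + 1)" for n unfolding om_def by simp
  have c1: "(int g + 1 + (int g + 1) + (int k + 1) + (int m + 1) = 0) = False" by simp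
  have c2: "(int g + 1 + (int g + 1) + (int k + 1) - (int m + 1) = 0) = (m = k + 2 * g + 2)" by linarith
  have c3: "(int g + 1 + (int g + 1) - (int k + 1) + (int m + 1) = 0) = (k = m + 2 * g + 2)" by linarith
  have c4: "(int g + 1 + (int g + 1) - (int k + 1) - (int m + 1) = 0) = (m + k = 2 * g)" by linarith
  have c5: "(int g + 1 - (int g + 1) + (int k + 1) + (int m + 1) = 0) = False" by simp
  have c6: "(int g + 1 - (int g + 1) + (int k + 1) - (int m + 1) = 0) = (k = m)" by linarith
  have c7: "(int g + 1 - (int g + 1) - (int k + 1) + (int m + 1) = 0) = (k = m)" by linarith
  have c8: "(int g + 1 - (int g + 1) - (int k + 1) - (int m + 1) = 0) = False" by simp
  have e: "pi / 4 * (of_bool False + of_bool (m = k + 2 * g + 2) + of_bool (k = m + 2 * g + 2) + of_bool (m + k = 2 * g)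
      + of_bool False + of_bool (k = m) + of_bool (k = m) + of_bool False) = Jv g k m"
    unfolding Jv_def by (simp add: algebra_simps)
  have "((\<lambda>t. cos (om g * t) * cos (om g * t) * cos (om k * t) * cos (om m * t)) has_integral
     (pi / 4 * (of_bool False + of_bool (m = k + 2 * g + 2) + of_bool (k = m + 2 * g + 2) + of_bool (m + k = 2 * g)
      + of_bool False + of_bool (k = m) + of_bool (k = m) + of_bool False))) {0..2*pi}"
    using J_int[of "int g + 1" "int g + 1" "int k + 1" "int m + 1"]
    unfolding o[symmetric] c1 c2 c3 c4 c5 c6 c7 c8 .
  then show ?thesis unfolding e .
qed

lemma sum_ob: fixes N a :: nat and d :: "nat \<Rightarrow> real" shows "(\<Sum>k\<le>N. d k * of_bool (k = a)) = (if a \<le> N then d a else (0::real))"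
proof -
  have "(\<Sum>k\<le>N. d k * of_bool (k = a)) = (\<Sum>k\<le>N. if k = a then d k else 0)"
    by (rule sum.cong) auto
  also have "\<dots> = (if a \<le> N then d a else 0)" by (subst sum.delta) auto
  finally show ?thesis .
qed

lemma sumJ:
  assumes "\<And>k. m = k + 2 * g + 2 \<Longrightarrow> d k = 0"
  shows "(\<Sum>k\<le>m + 2 * g. d k * Jv g k m) = pi / 4 * (2 * d m + (if m \<le> 2 * g then d (2 * g - m) else 0))"
proof -
  let ?N = "m + 2 * g"
  have "(\<Sum>k\<le>?N. d k * Jv g k m) = (\<Sum>k\<le>?N. pi / 4 * (2 * (d k * of_bool (k = m)) + d k * of_bool (k = m + 2 * g + 2)
      + d k * of_bool (m = k + 2 * g + 2) + d k * of_bool (m + k = 2 * g)))"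
    by (rule sum.cong) (simp_all only: Jv_def algebra_simps)
  also have "\<dots> = pi / 4 * (2 * (\<Sum>k\<le>?N. d k * of_bool (k = m)) + (\<Sum>k\<le>?N. d k * of_bool (k = m + 2 * g + 2))
      + (\<Sum>k\<le>?N. d k * of_bool (m = k + 2 * g + 2)) + (\<Sum>k\<le>?N. d k * of_bool (m + k = 2 * g)))"
    by (simp only: sum_distrib_left[symmetric] sum.distrib)
  also have "(\<Sum>k\<le>?N. d k * of_bool (k = m)) = d m" by (simp add: sum_ob)
  also have "(\<Sum>k\<le>?N. d k * of_bool (k = m + 2 * g + 2)) = 0" by (simp add: sum_ob)
  also have "(\<Sum>k\<le>?N. d k * of_bool (m = k + 2 * g + 2)) = 0"
    by (rule sum.neutral) (use assms in auto)
  also have "(\<Sum>k\<le>?N. d k * of_bool (m + k = 2 * g)) = (if m \<le> 2 * g then d (2 * g - m) else 0)"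
  proof (cases "m \<le> 2 * g")
    case True
    have "(\<Sum>k\<le>?N. d k * of_bool (m + k = 2 * g)) = (\<Sum>k\<le>?N. d k * of_bool (k = 2 * g - m))"
      by (rule sum.cong) (use True in auto)
    also have "\<dots> = d (2 * g - m)" using True by (simp add: sum_ob)
    finally show ?thesis using True by simp
  next
    case False
    have "(\<Sum>k\<le>?N. d k * of_bool (m + k = 2 * g)) = 0" by (rule sum.neutral) (use False in auto)
    with False show ?thesis by simp
  qed
  finally show ?thesis by simp
qed

lemma CC_swap1: "CC k g g m = CC g g k m" unfolding CC_def by (simp add: mult_ac)
lemma CC_swap2: "CC g k g m = CC g g k m" unfolding CC_def by (simp add: mult_ac)

lemma dM_spec:
  fixes g :: nat and K :: real
  assumes eta: "Wsp \<eta>"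
  shows "dM (\<lambda>j. if j = g then K else 0) \<eta> m = (om m)\<^sup>2 * \<eta> m
     - 3 * K\<^sup>2 / 8 * (2 * CC g g m m * \<eta> m + (if m \<le> 2 * g then CC g g (2 * g - m) m * \<eta> (2 * g - m) else 0))"
proof -
  define \<xi> where "\<xi> = (\<lambda>j::nat. if j = g then K else 0)"
  have xi: "Wsp \<xi>" by (rule Wsp_fin[of "{g}"]) (auto simp: \<xi>_def)
  define N where "N = m + 2 * g"
  have van: "\<And>k. k > m + 2 * g \<Longrightarrow> CC g g k m = 0" by (rule CC_vanish)
  define d where "d k = 3 * K\<^sup>2 * CC g g k m * \<eta> k" for k
  have pw: "(Gm m (Phi t \<eta>) (Phi t \<xi>) (Phi t \<xi>) + Gm m (Phi t \<xi>) (Phi t \<eta>) (Phi t \<xi>) + Gm m (Phi t \<xi>) (Phi t \<xi>) (Phi t \<eta>)) * cos (om m * t)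
     = (\<Sum>k\<le>N. d k * (cos (om g * t) * cos (om g * t) * cos (om k * t) * cos (om m * t)))" for t
  proof -
    let ?X = "Phi t \<xi>" and ?Y = "Phi t \<eta>"
    have sX: "\<And>i. i \<noteq> g \<Longrightarrow> ?X i = 0" by (simp add: Phi_def \<xi>_def)
    have Xg: "?X g = K * cos (om g * t)" by (simp add: Phi_def \<xi>_def)
    have a1: "Gm m ?Y ?X ?X = (\<Sum>k\<le>N. CC g g k m * ?X g * ?X g * ?Y k)"
    proof -
      have "Gm m ?Y ?X ?X = infsum (\<lambda>k. CC k g g m * ?Y k * ?X g * ?X g) UNIV" by (rule G_supp1) (use sX in auto)
      also have "\<dots> = infsum (\<lambda>k. CC g g k m * ?X g * ?X g * ?Y k) UNIV"
      proof (rule infsum_cong)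
        fix k show "CC k g g m * ?Y k * ?X g * ?X g = CC g g k m * ?X g * ?X g * ?Y k"
          using CC_swap1[of k g m] by (simp add: mult_ac)
      qed
      finally show ?thesis using infsum_to_fin[OF van] unfolding N_def by simp
    qed
    have a2: "Gm m ?X ?Y ?X = (\<Sum>k\<le>N. CC g g k m * ?X g * ?X g * ?Y k)"
    proof -
      have "Gm m ?X ?Y ?X = infsum (\<lambda>k. CC g k g m * ?X g * ?Y k * ?X g) UNIV" by (rule G_supp2) (use sX in auto)
      also have "\<dots> = infsum (\<lambda>k. CC g g k m * ?X g * ?X g * ?Y k) UNIV"
      proof (rule infsum_cong)
        fix k show "CC g k g m * ?X g * ?Y k * ?X g = CC g g k m * ?X g * ?X g * ?Y k"
          using CC_swap2[of g k m] by (simp add: mult_ac)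
      qed
      finally show ?thesis using infsum_to_fin[OF van] unfolding N_def by simp
    qed
    have a3: "Gm m ?X ?X ?Y = (\<Sum>k\<le>N. CC g g k m * ?X g * ?X g * ?Y k)"
    proof -
      have "Gm m ?X ?X ?Y = infsum (\<lambda>k. CC g g k m * ?X g * ?X g * ?Y k) UNIV" by (rule G_supp3) (use sX in auto)
      then show ?thesis using infsum_to_fin[OF van] unfolding N_def by simp
    qed
    show ?thesis unfolding a1 a2 a3 Xg
      by (simp add: Phi_def d_def sum_distrib_right sum_distrib_left power2_eq_square algebra_simps flip: sum.distrib)
  qed
  have "((\<lambda>t. \<Sum>k\<le>N. d k * (cos (om g * t) * cos (om g * t) * cos (om k * t) * cos (om m * t))) has_integral (\<Sum>k\<le>N. d k * Jv g k m)) {0..2*pi}"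
    by (intro has_integral_sum finite_atMost has_integral_mult_right J_nat)
  then have I: "integral {0..2*pi} (\<lambda>t. (Gm m (Phi t \<eta>) (Phi t \<xi>) (Phi t \<xi>) + Gm m (Phi t \<xi>) (Phi t \<eta>) (Phi t \<xi>) + Gm m (Phi t \<xi>) (Phi t \<xi>) (Phi t \<eta>)) * cos (om m * t))
     = (\<Sum>k\<le>N. d k * Jv g k m)"
    unfolding pw by (rule integral_unique)
  have dz: "\<And>k. m = k + 2 * g + 2 \<Longrightarrow> d k = 0"
  proof -
    fix k assume "m = k + 2 * g + 2"
    then have "CC g g m k = 0" by (intro CC_vanish) auto
    then show "d k = 0" unfolding d_def using CC_sym2[of g g k m] by simp
  qed
  have S: "(\<Sum>k\<le>N. d k * Jv g k m) = pi / 4 * (2 * d m + (if m \<le> 2 * g then d (2 * g - m) else 0))"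
    unfolding N_def by (rule sumJ[OF dz])
  show ?thesis
    unfolding \<xi>_def[symmetric] dM_general[OF xi eta] I S
    by (cases "m \<le> 2 * g") (simp_all add: d_def field_simps)
qed

lemma amgm_aux:
  fixes x y s :: real
  assumes x: "x \<ge> 1" and y: "y \<ge> 0" and s: "s \<ge> 0"
  shows "(x + 1) * y \<le> x powr (2 * (s + 3)) * y\<^sup>2 + inverse (x ^ 4)"
proof -
  have x0: "x > 0" using x by simp
  have sq: "0 \<le> (x ^ 3 * y - inverse (x ^ 2))\<^sup>2" by simp
  have e: "(x ^ 3 * y - inverse (x ^ 2))\<^sup>2 = x ^ 6 * y\<^sup>2 - 2 * x * y + inverse (x ^ 4)"
    using x0 by (simp add: field_simps power2_eq_square eval_nat_numeral)
  have "1 * y \<le> x * y" using x y by (rule mult_right_mono)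
  then have "(x + 1) * y \<le> 2 * x * y" by (simp add: algebra_simps)
  also have "\<dots> \<le> x ^ 6 * y\<^sup>2 + inverse (x ^ 4)" using sq e by linarith
  also have "x ^ 6 \<le> x powr (2 * (s + 3))"
  proof -
    have "x ^ 6 = x powr (real 6)" using x0 by (simp add: powr_realpow)
    also have "\<dots> \<le> x powr (2 * (s + 3))" by (rule powr_mono) (use s x in auto)
    finally show ?thesis .
  qed
  then have "x ^ 6 * y\<^sup>2 \<le> x powr (2 * (s + 3)) * y\<^sup>2" by (rule mult_right_mono) simp
  finally show ?thesis by simp
qed

lemma l2s_Wsp:
  assumes "s \<ge> 0" "l2s (s + 3) \<eta>"
  shows "Wsp \<eta>"
proof -
  have g: "summable (\<lambda>i. real i powr (2 * (s + 3)) * (\<eta> i)\<^sup>2 + inverse (real i ^ 4))"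
    using assms(2) unfolding l2s_def by (intro summable_add inverse_power_summable) auto
  have "summable (\<lambda>i. (real i + 1) * \<bar>\<eta> i\<bar>)"
  proof (rule summable_comparison_test'[OF g, of 1])
    fix i :: nat assume "i \<ge> 1"
    then have "real i \<ge> 1" by simp
    then show "norm ((real i + 1) * \<bar>\<eta> i\<bar>) \<le> real i powr (2 * (s + 3)) * (\<eta> i)\<^sup>2 + inverse (real i ^ 4)"
      using amgm_aux[of "real i" "\<bar>\<eta> i\<bar>" s] assms(1) by simp
  qed
  then show ?thesis unfolding Wsp_def by (subst summable_on_UNIV_nonneg_real_iff) auto
qed

lemma fin_l2s: "finite S \<Longrightarrow> (\<And>i. i \<notin> S \<Longrightarrow> a i = 0) \<Longrightarrow> l2s r a"
  unfolding l2s_def by (rule summable_finite) auto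

theorem lemma7p1:
  fixes \<gamma> :: nat and s \<sigma> :: real and \<xi> :: "nat \<Rightarrow> real"
  assumes "s \<ge> 0"
    and "\<sigma> = 1 \<or> \<sigma> = -1"
    and "\<xi> = (\<lambda>m. if m = \<gamma> then \<sigma> * 2 * om \<gamma> * sqrt (2 / (3 * CC \<gamma> \<gamma> \<gamma> \<gamma>)) else 0)"
  shows "ker_dM s \<xi> = {\<lambda>_. 0} \<longleftrightarrow>
           ((\<forall>m \<ge> 2 * \<gamma> + 1. (om m)\<^sup>2 * CC \<gamma> \<gamma> \<gamma> \<gamma> - 2 * (om \<gamma>)\<^sup>2 * CC \<gamma> \<gamma> m m \<noteq> 0)
            \<and> (\<forall>n < \<gamma>. Dgn \<gamma> n \<noteq> 0))"
proof -
  define C0 where "C0 = CC \<gamma> \<gamma> \<gamma> \<gamma>"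
  have C0p: "C0 > 0" unfolding C0_def by (rule CC_pos)
  define K where "K = \<sigma> * 2 * om \<gamma> * sqrt (2 / (3 * C0))"
  have xi: "\<xi> = (\<lambda>j. if j = \<gamma> then K else 0)" using assms(3) unfolding K_def C0_def .
  have s2: "\<sigma>\<^sup>2 = 1" using assms(2) by auto
  have q2: "(sqrt (2 / (3 * C0)))\<^sup>2 = 2 / (3 * C0)" using C0p by simp
  have K2: "K\<^sup>2 = 8 * (om \<gamma>)\<^sup>2 / (3 * C0)"
  proof -
    have "K\<^sup>2 = \<sigma>\<^sup>2 * 4 * (om \<gamma>)\<^sup>2 * (sqrt (2 / (3 * C0)))\<^sup>2" unfolding K_def by (simp add: power_mult_distrib)
    also have "\<dots> = 8 * (om \<gamma>)\<^sup>2 / (3 * C0)" unfolding s2 q2 by simp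
    finally show ?thesis .
  qed
  define a where "a m = (om m)\<^sup>2 * C0 - 2 * (om \<gamma>)\<^sup>2 * CC \<gamma> \<gamma> m m" for m
  define b where "b m = (om \<gamma>)\<^sup>2 * CC \<gamma> \<gamma> (2 * \<gamma> - m) m" for m
  have key: "C0 * dM \<xi> \<eta> m = a m * \<eta> m - (if m \<le> 2 * \<gamma> then b m * \<eta> (2 * \<gamma> - m) else 0)"
    if "Wsp \<eta>" for \<eta> m
  proof -
    have d: "dM \<xi> \<eta> m = (om m)\<^sup>2 * \<eta> m - 3 * K\<^sup>2 / 8 * (2 * CC \<gamma> \<gamma> m m * \<eta> m + (if m \<le> 2 * \<gamma> then CC \<gamma> \<gamma> (2 * \<gamma> - m) m * \<eta> (2 * \<gamma> - m) else 0))"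
      unfolding xi by (rule dM_spec[OF that])
    have k: "3 * K\<^sup>2 / 8 = (om \<gamma>)\<^sup>2 / C0" using K2 by simp
    show ?thesis unfolding d k a_def b_def using C0p by (cases "m \<le> 2 * \<gamma>") (simp_all add: field_simps)
  qed
  have kerI: "\<eta> \<in> ker_dM s \<xi>"
    if "l2s (s + 3) \<eta>" "\<And>m. a m * \<eta> m - (if m \<le> 2 * \<gamma> then b m * \<eta> (2 * \<gamma> - m) else 0) = 0" for \<eta>
  proof -
    have w: "Wsp \<eta>" by (rule l2s_Wsp[OF assms(1) that(1)])
    have "dM \<xi> \<eta> m = 0" for m using key[OF w, of m] that(2)[of m] C0p by simp
    then show ?thesis unfolding ker_dM_def using that(1) by simp
  qed
  have kerD: "a m * \<eta> m = (if m \<le> 2 * \<gamma> then b m * \<eta> (2 * \<gamma> - m) else 0)" if "\<eta> \<in> ker_dM s \<xi>" for \<eta> m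
  proof -
    have l: "l2s (s + 3) \<eta>" and z: "dM \<xi> \<eta> m = 0" using that unfolding ker_dM_def by auto
    have w: "Wsp \<eta>" by (rule l2s_Wsp[OF assms(1) l])
    show ?thesis using key[OF w, of m] z by simp
  qed
  have bsym: "b (2 * \<gamma> - n) = b n" if "n \<le> 2 * \<gamma>" for n
  proof -
    have "2 * \<gamma> - (2 * \<gamma> - n) = n" using that by simp
    then show ?thesis unfolding b_def using CC_sym2[of \<gamma> \<gamma> n "2 * \<gamma> - n"] by simp
  qed
  have Dg: "Dgn \<gamma> n = a n * a (2 * \<gamma> - n) - (b n)\<^sup>2" for n
    unfolding Dgn_def a_def b_def C0_def using CC_swap2[of \<gamma> "2 * \<gamma> - n" n] by simp
  show ?thesis
  proof
    assume ker0: "ker_dM s \<xi> = {\<lambda>_. 0}"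
    show "(\<forall>m \<ge> 2 * \<gamma> + 1. (om m)\<^sup>2 * CC \<gamma> \<gamma> \<gamma> \<gamma> - 2 * (om \<gamma>)\<^sup>2 * CC \<gamma> \<gamma> m m \<noteq> 0) \<and> (\<forall>n < \<gamma>. Dgn \<gamma> n \<noteq> 0)"
    proof (intro conjI allI impI)
      fix m assume m: "m \<ge> 2 * \<gamma> + 1"
      show "(om m)\<^sup>2 * CC \<gamma> \<gamma> \<gamma> \<gamma> - 2 * (om \<gamma>)\<^sup>2 * CC \<gamma> \<gamma> m m \<noteq> 0"
      proof
        assume "(om m)\<^sup>2 * CC \<gamma> \<gamma> \<gamma> \<gamma> - 2 * (om \<gamma>)\<^sup>2 * CC \<gamma> \<gamma> m m = 0"
        then have az: "a m = 0" unfolding a_def C0_def .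
        define \<eta> where "\<eta> = (\<lambda>j::nat. if j = m then (1::real) else 0)"
        have "\<eta> \<in> ker_dM s \<xi>"
        proof (rule kerI)
          show "l2s (s + 3) \<eta>" by (rule fin_l2s[of "{m}"]) (auto simp: \<eta>_def)
          fix m' show "a m' * \<eta> m' - (if m' \<le> 2 * \<gamma> then b m' * \<eta> (2 * \<gamma> - m') else 0) = 0"
            using az m by (auto simp: \<eta>_def)
        qed
        with ker0 have "\<eta> = (\<lambda>_. 0)" by auto
        then have "\<eta> m = 0" by simp
        then show False by (simp add: \<eta>_def)
      qed
    next
      fix n assume n: "n < \<gamma>"
      show "Dgn \<gamma> n \<noteq> 0"
      proof
        assume Dz: "Dgn \<gamma> n = 0"
        define n' where "n' = 2 * \<gamma> - n"
        have nn': "n \<noteq> n'" "n < n'" "n' \<le> 2 * \<gamma>" "2 * \<gamma> - n' = n" "n \<le> 2 * \<gamma>" using n by (auto simp: n'_def)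
        define \<beta> where "\<beta> = b n"
        have bn': "b n' = \<beta>" using bsym[of n] nn' unfolding \<beta>_def n'_def by simp
        have D0: "a n * a n' - \<beta>\<^sup>2 = 0" using Dz Dg[of n] unfolding \<beta>_def n'_def by simp
        define u where "u = (if a n = 0 \<and> \<beta> = 0 then 1 else \<beta>)"
        define v where "v = (if a n = 0 \<and> \<beta> = 0 then 0 else a n)"
        have uv: "u \<noteq> 0 \<or> v \<noteq> 0" unfolding u_def v_def by auto
        have e1: "a n * u - \<beta> * v = 0" unfolding u_def v_def by (auto simp: algebra_simps)
        have e2: "a n' * v - \<beta> * u = 0" using D0 unfolding u_def v_def by (auto simp: algebra_simps power2_eq_square)
        define \<eta> where "\<eta> = (\<lambda>j. if j = n then u else if j = n' then v else 0)"
        have "\<eta> \<in> ker_dM s \<xi>"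
        proof (rule kerI)
          show "l2s (s + 3) \<eta>" by (rule fin_l2s[of "{n, n'}"]) (auto simp: \<eta>_def)
          fix m show "a m * \<eta> m - (if m \<le> 2 * \<gamma> then b m * \<eta> (2 * \<gamma> - m) else 0) = 0"
          proof (cases "m = n")
            case True
            have "2 * \<gamma> - m = n'" using True unfolding n'_def by simp
            then show ?thesis using True e1 nn' unfolding \<eta>_def \<beta>_def by auto
          next
            case False
            show ?thesis
            proof (cases "m = n'")
              case True then show ?thesis using e2 nn' bn' False unfolding \<eta>_def by auto
            next
              case F2: False
              have "2 * \<gamma> - m \<noteq> n \<and> 2 * \<gamma> - m \<noteq> n'" if "m \<le> 2 * \<gamma>"
                using False F2 nn' that unfolding n'_def by auto
              then show ?thesis using False F2 unfolding \<eta>_def by auto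
            qed
          qed
        qed
        with ker0 have "\<eta> = (\<lambda>_. 0)" by auto
        then have "\<eta> n = 0" "\<eta> n' = 0" by auto
        then show False using uv nn' unfolding \<eta>_def by auto
      qed
    qed
  next
    assume conds: "(\<forall>m \<ge> 2 * \<gamma> + 1. (om m)\<^sup>2 * CC \<gamma> \<gamma> \<gamma> \<gamma> - 2 * (om \<gamma>)\<^sup>2 * CC \<gamma> \<gamma> m m \<noteq> 0) \<and> (\<forall>n < \<gamma>. Dgn \<gamma> n \<noteq> 0)"
    have A: "a m \<noteq> 0" if "m \<ge> 2 * \<gamma> + 1" for m using conds that unfolding a_def C0_def by auto
    have Dn: "a n * a (2 * \<gamma> - n) - (b n)\<^sup>2 \<noteq> 0" if "n < \<gamma>" for n using conds that Dg[of n] by auto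
    show "ker_dM s \<xi> = {\<lambda>_. 0}"
    proof
      have "(\<lambda>_. 0::real) \<in> ker_dM s \<xi>"
        by (rule kerI) (auto intro: fin_l2s[of "{}"])
      then show "{\<lambda>_. 0} \<subseteq> ker_dM s \<xi>" by simp
      show "ker_dM s \<xi> \<subseteq> {\<lambda>_. 0}"
      proof
        fix \<eta> assume eta: "\<eta> \<in> ker_dM s \<xi>"
        have E: "a m * \<eta> m = (if m \<le> 2 * \<gamma> then b m * \<eta> (2 * \<gamma> - m) else 0)" for m using kerD[OF eta] .
        have pair: "\<eta> n = 0 \<and> \<eta> (2 * \<gamma> - n) = 0" if "n < \<gamma>" for n
        proof -
          define n' where "n' = 2 * \<gamma> - n"
          have nn: "n \<le> 2 * \<gamma>" "n' \<le> 2 * \<gamma>" "2 * \<gamma> - n' = n" using that by (auto simp: n'_def)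
          have bn': "b n' = b n" using bsym[of n] nn unfolding n'_def by simp
          have E1: "a n * \<eta> n = b n * \<eta> n'" using E[of n] nn unfolding n'_def by simp
          have E2: "a n' * \<eta> n' = b n * \<eta> n" using E[of n'] nn bn' by simp
          have D: "a n * a n' - (b n)\<^sup>2 \<noteq> 0" using Dn[OF that] unfolding n'_def .
          have "(a n * a n' - (b n)\<^sup>2) * \<eta> n = a n' * (a n * \<eta> n) - b n * (b n * \<eta> n)"
            by (simp add: algebra_simps power2_eq_square)
          also have "\<dots> = a n' * (b n * \<eta> n') - b n * (a n' * \<eta> n')" using E1 E2 by simp
          also have "\<dots> = 0" by (simp add: algebra_simps)
          finally have z1: "(a n * a n' - (b n)\<^sup>2) * \<eta> n = 0" .
          have "(a n * a n' - (b n)\<^sup>2) * \<eta> n' = a n * (a n' * \<eta> n') - b n * (b n * \<eta> n')"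
            by (simp add: algebra_simps power2_eq_square)
          also have "\<dots> = a n * (b n * \<eta> n) - b n * (a n * \<eta> n)" using E1 E2 by simp
          also have "\<dots> = 0" by (simp add: algebra_simps)
          finally have z2: "(a n * a n' - (b n)\<^sup>2) * \<eta> n' = 0" .
          show ?thesis using z1 z2 D unfolding n'_def by simp
        qed
        have "\<eta> m = 0" for m
        proof -
          consider "m \<ge> 2 * \<gamma> + 1" | "m = \<gamma>" | "m < \<gamma>" | "\<gamma> < m \<and> m \<le> 2 * \<gamma>" by linarith
          then show ?thesis
          proof cases
            case 1 then show ?thesis using E[of m] A[of m] by simp
          next
            case 2
            have e: "a \<gamma> * \<eta> \<gamma> = b \<gamma> * \<eta> \<gamma>" using E[of \<gamma>] by simp
            have ab: "a \<gamma> - b \<gamma> = - 2 * ((om \<gamma>)\<^sup>2 * C0)" unfolding a_def b_def C0_def by (simp add: algebra_simps)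
            have nz: "(om \<gamma>)\<^sup>2 * C0 \<noteq> 0" using C0p by (simp add: om_def)
            have "(a \<gamma> - b \<gamma>) * \<eta> \<gamma> = 0" using e by (simp add: algebra_simps)
            then show ?thesis using ab nz 2 by simp
          next
            case 3 then show ?thesis using pair[of m] by simp
          next
            case 4
            then have "2 * \<gamma> - m < \<gamma>" "2 * \<gamma> - (2 * \<gamma> - m) = m" by arith+
            then show ?thesis using pair[of "2 * \<gamma> - m"] by simp
          qed
        qed
        then show "\<eta> \<in> {\<lambda>_. 0}" by auto
      qed
    qed
  qed
qed

end
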